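(* Let $R=DV$ be any decomposition of the boundary matrix of the cone filtration, and let $\omega*\sigma,\omega*\tau$ (with $\sigma,\tau\in K$) form a persistence pair, i.e. $\operatorname{low}R[\omega*\tau]=\omega*\sigma$; set $d=\max\sigma$ and $b=\max\tau$ (so $d>b$). Let $\gamma$ be the restriction of $V[\omega*\tau]$ to cone simplices and let $z=(\partial\gamma)\cap K$ be the restriction of $\partial\gamma$ to base simplices. Then $z$ is supported in $K_{\ge b}$, $\partial z$ is supported in $K_{\ge d}$ (so $[z]\in H(K_{\ge b},K_{\ge d})$), $\tau\in z$, and $\sigma\in\partial z$.
   Context: Coefficients are in a field $\mathbb F$. Let $K$ be a finite $\Delta$-complex in which every simplex $\sigma$ carries an integer interval $T(\sigma)=[\min\sigma,\max\sigma]$ with $\min\sigma<\max\sigma$, such that whenever $\sigma$ is a proper face of $\tau$, $\min\sigma<\min\tau<\max\tau<\max\sigma$; assume the values $\min\sigma$ ($\sigma\in K$) are pairwise distinct and the values $\max\sigma$ are pairwise distinct. Write $K_{\le i}=\{\sigma:\min\sigma\le i\}$, $K_{\ge j}=\{\sigma:\max\sigma\ge j\}$ (subcomplexes), and $K[b,d]=K_{\ge b}\cap K_{\le d}$. The cone $\omega*K$ consists of the simplices of $K$ ("base simplices"), a new vertex $\omega$, and simplices $\omega*\sigma$ for $\sigma\in K$ ("cone simplices"), with $\partial(\omega*\sigma)=\sigma-\omega*\partial\sigma$ (for a vertex $v$, $\partial(\omega*v)=v-\omega$). The cone filtration orders base simplices by increasing $\min$, then $\omega$, then the simplices $\omega*\sigma$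 by decreasing $\max\sigma$. $D$ is the boundary matrix of $\omega*K$ with rows and columns in this order; $R=DV$ denotes a decomposition with $V$ invertible upper-triangular and $R$ reduced (pivots $\operatorname{low}$ — lowest nonzero entries — of nonzero columns in distinct rows). "$\sigma\in c$" means the coefficient of $\sigma$ in chain $c$ is nonzero; a chain is supported in a subcomplex $L$ if all its nonzero coefficients are on simplices of $L$. *)

theory Defs
  imports Main
begin

definition delta_complex :: "'a set \<Rightarrow> ('a \<Rightarrow> nat) \<Rightarrow> ('a \<Rightarrow> nat \<Rightarrow> 'a) \<Rightarrow> bool" where
  "delta_complex K dim fc \<longleftrightarrow> finite K \<and>
     (\<forall>s\<in>K. 0 < dim s \<longrightarrow> (\<forall>i\<le>dim s. fc s i \<in> K \<and> dim (fc s i) = dim s - 1)) \<and>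
     (\<forall>s\<in>K. \<forall>i j. 2 \<le> dim s \<and> i < j \<and> j \<le> dim s \<longrightarrow>
        fc (fc s j) i = fc (fc s i) (j - 1))"

definition facet_rel :: "('a \<Rightarrow> nat) \<Rightarrow> ('a \<Rightarrow> nat \<Rightarrow> 'a) \<Rightarrow> ('a \<times> 'a) set" where
  "facet_rel dim fc = {(r, s). 0 < dim s \<and> (\<exists>i\<le>dim s. r = fc s i)}"

definition proper_face :: "('a \<Rightarrow> nat) \<Rightarrow> ('a \<Rightarrow> nat \<Rightarrow> 'a) \<Rightarrow> 'a \<Rightarrow> 'a \<Rightarrow> bool" where
  "proper_face dim fc r s \<longleftrightarrow> (r, s) \<in> (facet_rel dim fc)\<^sup>+"

definition bcoef :: "('a \<Rightarrow> nat) \<Rightarrow> ('a \<Rightarrow> nat \<Rightarrow> 'a) \<Rightarrow> 'a \<Rightarrow> 'a \<Rightarrow> 'f::field" where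
  "bcoef dim fc r s = (if dim s = 0 then 0 else
      (\<Sum>i\<in>{i. i \<le> dim s \<and> fc s i = r}. (-1) ^ i))"

definition bdry :: "'a set \<Rightarrow> ('a \<Rightarrow> nat) \<Rightarrow> ('a \<Rightarrow> nat \<Rightarrow> 'a) \<Rightarrow> ('a \<Rightarrow> 'f::field) \<Rightarrow> 'a \<Rightarrow> 'f" where
  "bdry K dim fc c r = (\<Sum>s\<in>K. bcoef dim fc r s * c s)"

definition interval_filtration ::
  "'a set \<Rightarrow> ('a \<Rightarrow> nat) \<Rightarrow> ('a \<Rightarrow> nat \<Rightarrow> 'a) \<Rightarrow> ('a \<Rightarrow> int) \<Rightarrow> ('a \<Rightarrow> int) \<Rightarrow> bool" where
  "interval_filtration K dim fc mn mx \<longleftrightarrow>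
     (\<forall>s\<in>K. mn s < mx s) \<and>
     (\<forall>r\<in>K. \<forall>s\<in>K. proper_face dim fc r s \<longrightarrow> mn r < mn s \<and> mn s < mx s \<and> mx s < mx r) \<and>
     inj_on mn K \<and> inj_on mx K"

datatype 'a cone_simplex = Base 'a | Apex | Cone 'a

definition cone_set :: "'a set \<Rightarrow> 'a cone_simplex set" where
  "cone_set K = Base ` K \<union> {Apex} \<union> Cone ` K"

text \<open>Boundary matrix of the cone: cD x y = coefficient of x in the boundary of y, where
  d(w*s) = s - w*(ds), and d(w*v) = v - w for a vertex v.\<close>
fun cD :: "('a \<Rightarrow> nat) \<Rightarrow> ('a \<Rightarrow> nat \<Rightarrow> 'a) \<Rightarrow> 'a cone_simplex \<Rightarrow> 'a cone_simplex \<Rightarrow> 'f::field" where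
  "cD dim fc (Base r) (Base s) = bcoef dim fc r s"
| "cD dim fc _ (Base s) = 0"
| "cD dim fc _ Apex = 0"
| "cD dim fc (Base r) (Cone s) = (if r = s then 1 else 0)"
| "cD dim fc Apex (Cone s) = (if dim s = 0 then -1 else 0)"
| "cD dim fc (Cone r) (Cone s) = - bcoef dim fc r s"

text \<open>Cone filtration order: base simplices by increasing min, then the apex,
  then cone simplices by decreasing max.\<close>
fun clev :: "'a cone_simplex \<Rightarrow> nat" where
  "clev (Base _) = 0" | "clev Apex = 1" | "clev (Cone _) = 2"

fun cval :: "('a \<Rightarrow> int) \<Rightarrow> ('a \<Rightarrow> int) \<Rightarrow> 'a cone_simplex \<Rightarrow> int" where
  "cval mn mx (Base s) = mn s" | "cval mn mx Apex = 0" | "cval mn mx (Cone s) = - mx s"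

definition cless :: "('a \<Rightarrow> int) \<Rightarrow> ('a \<Rightarrow> int) \<Rightarrow> 'a cone_simplex \<Rightarrow> 'a cone_simplex \<Rightarrow> bool" where
  "cless mn mx x y \<longleftrightarrow> clev x < clev y \<or> (clev x = clev y \<and> cval mn mx x < cval mn mx y)"

definition mat_mult :: "'b set \<Rightarrow> ('b \<Rightarrow> 'b \<Rightarrow> 'f::field) \<Rightarrow> ('b \<Rightarrow> 'b \<Rightarrow> 'f) \<Rightarrow> 'b \<Rightarrow> 'b \<Rightarrow> 'f" where
  "mat_mult C A B x y = (\<Sum>z\<in>C. A x z * B z y)"

definition mat_invertible :: "'b set \<Rightarrow> ('b \<Rightarrow> 'b \<Rightarrow> 'f::field) \<Rightarrow> bool" where
  "mat_invertible C V \<longleftrightarrow> (\<exists>W. \<forall>x\<in>C. \<forall>y\<in>C.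
      mat_mult C V W x y = (if x = y then 1 else 0) \<and> mat_mult C W V x y = (if x = y then 1 else 0))"

definition upper_triangular :: "'b set \<Rightarrow> ('b \<Rightarrow> 'b \<Rightarrow> bool) \<Rightarrow> ('b \<Rightarrow> 'b \<Rightarrow> 'f::field) \<Rightarrow> bool" where
  "upper_triangular C lt V \<longleftrightarrow> (\<forall>x\<in>C. \<forall>y\<in>C. lt y x \<longrightarrow> V x y = 0)"

definition is_low :: "'b set \<Rightarrow> ('b \<Rightarrow> 'b \<Rightarrow> bool) \<Rightarrow> ('b \<Rightarrow> 'b \<Rightarrow> 'f::field) \<Rightarrow> 'b \<Rightarrow> 'b \<Rightarrow> bool" where
  "is_low C lt A j x \<longleftrightarrow> x \<in> C \<and> A x j \<noteq> 0 \<and> (\<forall>y\<in>C. lt x y \<longrightarrow> A y j = 0)"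

definition reduced :: "'b set \<Rightarrow> ('b \<Rightarrow> 'b \<Rightarrow> bool) \<Rightarrow> ('b \<Rightarrow> 'b \<Rightarrow> 'f::field) \<Rightarrow> bool" where
  "reduced C lt A \<longleftrightarrow> (\<forall>j1\<in>C. \<forall>j2\<in>C. \<forall>x. j1 \<noteq> j2 \<longrightarrow> is_low C lt A j1 x \<longrightarrow> \<not> is_low C lt A j2 x)"

end

theory Submission
  imports Defs "HOL-Library.Product_Lexorder"
begin

lemma tri_diag:
  fixes V W :: "'b \<Rightarrow> 'b \<Rightarrow> 'f::field" and f :: "'b \<Rightarrow> 'c::linorder"
  assumes "finite C" "inj_on f C"
   "\<forall>x\<in>C. \<forall>y\<in>C. f y < f x \<longrightarrow> V x y = 0"
   "\<forall>x\<in>C. \<forall>y\<in>C. mat_mult C V W x y = (if x = y then 1 else 0)"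
   "\<forall>x\<in>C. \<forall>y\<in>C. mat_mult C W V x y = (if x = y then 1 else 0)"
  shows "\<forall>x\<in>C. V x x \<noteq> 0"
  using assms
proof (induction C arbitrary: W rule: finite_psubset_induct)
  case (psubset C)
  show ?case
  proof (cases "C = {}")
    case True then show ?thesis by simp
  next
    case False
    define m where "m = inv_into C f (Min (f ` C))"
    have MinC: "Min (f ` C) \<in> f ` C" using False psubset.hyps by simp
    have mC: "m \<in> C" unfolding m_def using MinC by (simp add: inv_into_into)
    have fm: "f m = Min (f ` C)" unfolding m_def using MinC by (simp add: f_inv_into_f)
    have mmin: "\<forall>w\<in>C. w \<noteq> m \<longrightarrow> f m < f w"
    proof (intro ballI impI)
      fix w assume w: "w \<in> C" "w \<noteq> m"
      have "f m \<le> f w" using fm w psubset.hyps by simp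
      moreover have "f m \<noteq> f w" using psubset.prems(1) w mC by (metis inj_on_eq_iff)
      ultimately show "f m < f w" by simp
    qed
    have col: "\<forall>w\<in>C. w \<noteq> m \<longrightarrow> V w m = 0" using mmin psubset.prems(2) mC by blast
    have sumV: "mat_mult C W V x m = W x m * V m m" if "x \<in> C" for x
    proof -
      have "mat_mult C W V x m = W x m * V m m + (\<Sum>z\<in>C - {m}. W x z * V z m)"
        unfolding mat_mult_def using mC psubset.hyps by (simp add: sum.remove)
      also have "(\<Sum>z\<in>C - {m}. W x z * V z m) = 0" using col by (intro sum.neutral) auto
      finally show ?thesis by simp
    qed
    have a: "V m m \<noteq> 0"
    proof
      assume "V m m = 0"
      then have "mat_mult C W V m m = 0" using sumV mC by simp
      then show False using psubset.prems(4) mC by simp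
    qed
    have Wcol: "W x m = 0" if "x \<in> C" "x \<noteq> m" for x
      using sumV[OF that(1)] psubset.prems(4) that mC a by auto
    define C' where "C' = C - {m}"
    have C'sub: "C' \<subset> C" using mC C'_def by auto
    have split: "mat_mult C A B x y = A x m * B m y + mat_mult C' A B x y" for A B :: "'b \<Rightarrow> 'b \<Rightarrow> 'f" and x y
      unfolding mat_mult_def C'_def using mC psubset.hyps by (simp add: sum.remove)
    have p1: "\<forall>x\<in>C'. \<forall>y\<in>C'. mat_mult C' V W x y = (if x = y then 1 else 0)"
    proof (intro ballI)
      fix x y assume xy: "x \<in> C'" "y \<in> C'"
      have "V x m = 0" using col xy C'_def by auto
      then show "mat_mult C' V W x y = (if x = y then 1 else 0)"
        using split[of V W x y] psubset.prems(3) xy C'_def by auto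
    qed
    have p2: "\<forall>x\<in>C'. \<forall>y\<in>C'. mat_mult C' W V x y = (if x = y then 1 else 0)"
    proof (intro ballI)
      fix x y assume xy: "x \<in> C'" "y \<in> C'"
      have "W x m = 0" using Wcol xy C'_def by auto
      then show "mat_mult C' W V x y = (if x = y then 1 else 0)"
        using split[of W V x y] psubset.prems(4) xy C'_def by auto
    qed
    have IH: "\<forall>x\<in>C'. V x x \<noteq> 0"
      apply (rule psubset.IH[OF C'sub, of W])
      using psubset.prems(1,2) C'sub p1 p2 by (auto intro: inj_on_subset, blast)
    show ?thesis using IH a C'_def by auto
  qed
qed

theorem claim6p2:
  fixes K :: "'a set" and dim :: "'a \<Rightarrow> nat" and fc :: "'a \<Rightarrow> nat \<Rightarrow> 'a"
    and mn mx :: "'a \<Rightarrow> int"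
    and V R :: "'a cone_simplex \<Rightarrow> 'a cone_simplex \<Rightarrow> 'f::field"
    and \<sigma> \<tau> :: 'a
  assumes cx: "delta_complex K dim fc"
    and filt: "interval_filtration K dim fc mn mx"
    and RDV: "\<forall>x\<in>cone_set K. \<forall>y\<in>cone_set K. R x y = mat_mult (cone_set K) (cD dim fc) V x y"
    and Vinv: "mat_invertible (cone_set K) V"
    and Vup: "upper_triangular (cone_set K) (cless mn mx) V"
    and Rred: "reduced (cone_set K) (cless mn mx) R"
    and \<sigma>K: "\<sigma> \<in> K" and \<tau>K: "\<tau> \<in> K"
    and pair: "is_low (cone_set K) (cless mn mx) R (Cone \<tau>) (Cone \<sigma>)"
  defines "z \<equiv> (\<lambda>r. \<Sum>c\<in>cone_set K. cD dim fc (Base r) c *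
                  (case c of Cone s \<Rightarrow> V (Cone s) (Cone \<tau>) | _ \<Rightarrow> 0))"
    and "d \<equiv> mx \<sigma>" and "b \<equiv> mx \<tau>"
  shows "d > b
    \<and> (\<forall>r. z r \<noteq> 0 \<longrightarrow> r \<in> K \<and> mx r \<ge> b)
    \<and> (\<forall>r. bdry K dim fc z r \<noteq> 0 \<longrightarrow> r \<in> K \<and> mx r \<ge> d)
    \<and> z \<tau> \<noteq> 0
    \<and> bdry K dim fc z \<sigma> \<noteq> 0"
proof -
  let ?C = "cone_set K"
  have finK: "finite K" using cx unfolding delta_complex_def by simp
  have finC: "finite ?C" using finK unfolding cone_set_def by simp
  have ConeC: "Cone r \<in> ?C \<longleftrightarrow> r \<in> K" for r unfolding cone_set_def by auto
  have zeq: "z r = (if r \<in> K then V (Cone r) (Cone \<tau>) else 0)" for r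
  proof -
    have "z r = (\<Sum>c\<in>?C. if c = Cone r then V (Cone r) (Cone \<tau>) else 0)"
      unfolding z_def
    proof (rule sum.cong)
      fix c show "cD dim fc (Base r) c * (case c of Cone s \<Rightarrow> V (Cone s) (Cone \<tau>) | _ \<Rightarrow> 0)
        = (if c = Cone r then V (Cone r) (Cone \<tau>) else 0)" by (cases c) auto
    qed simp
    also have "\<dots> = (if Cone r \<in> ?C then V (Cone r) (Cone \<tau>) else 0)"
      using finC by simp
    finally show ?thesis using ConeC by simp
  qed
  have Req: "R (Cone r) (Cone \<tau>) = - bdry K dim fc z r" if rK: "r \<in> K" for r
  proof -
    let ?h = "\<lambda>c. cD dim fc (Cone r) c * V c (Cone \<tau>)"
    have "R (Cone r) (Cone \<tau>) = (\<Sum>c\<in>?C. ?h c)"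
      using RDV rK \<tau>K ConeC unfolding mat_mult_def by blast
    also have "\<dots> = (\<Sum>c\<in>Cone ` K. ?h c)"
    proof (rule sum.mono_neutral_right[OF finC])
      show "Cone ` K \<subseteq> ?C" unfolding cone_set_def by auto
      show "\<forall>i\<in>?C - Cone ` K. ?h i = 0"
      proof
        fix i assume "i \<in> ?C - Cone ` K"
        then show "?h i = 0" by (cases i) (auto simp: cone_set_def)
      qed
    qed
    also have "\<dots> = (\<Sum>s\<in>K. ?h (Cone s))" by (simp add: sum.reindex inj_on_def)
    also have "\<dots> = (\<Sum>s\<in>K. - (bcoef dim fc r s * z s))"
      by (rule sum.cong) (auto simp: zeq)
    also have "\<dots> = - bdry K dim fc z r" unfolding bdry_def by (simp add: sum_negf)
    finally show ?thesis .
  qed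
  have facet: "r \<in> K \<and> mx s < mx r" if sK: "s \<in> K" and nz: "(bcoef dim fc r s :: 'f) \<noteq> 0" for r s
  proof -
    have d0: "dim s \<noteq> 0" using nz unfolding bcoef_def by (auto split: if_splits)
    have "{i. i \<le> dim s \<and> fc s i = r} \<noteq> {}"
    proof
      assume e: "{i. i \<le> dim s \<and> fc s i = r} = {}"
      show False using nz d0 e unfolding bcoef_def by (metis sum.empty)
    qed
    then obtain i where i: "i \<le> dim s" "fc s i = r" by auto
    have rK: "r \<in> K" using cx sK d0 i unfolding delta_complex_def by auto
    have "(r, s) \<in> facet_rel dim fc" unfolding facet_rel_def using d0 i by auto
    then have "proper_face dim fc r s" unfolding proper_face_def by auto
    then have "mx s < mx r" using filt rK sK unfolding interval_filtration_def by blast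
    then show ?thesis using rK by simp
  qed
  have bdry_nz: "\<exists>s\<in>K. bcoef dim fc r s \<noteq> (0::'f) \<and> z s \<noteq> 0" if "bdry K dim fc z r \<noteq> 0" for r
  proof (rule ccontr)
    assume "\<not> ?thesis"
    then have "bdry K dim fc z r = 0" unfolding bdry_def by (intro sum.neutral) auto
    then show False using that by simp
  qed
  have zsupp: "\<forall>r. z r \<noteq> 0 \<longrightarrow> r \<in> K \<and> mx r \<ge> b"
  proof (intro allI impI)
    fix r assume nz: "z r \<noteq> 0"
    then have rK: "r \<in> K" and V0: "V (Cone r) (Cone \<tau>) \<noteq> 0" using zeq[of r] by (auto split: if_splits)
    have "\<not> cless mn mx (Cone \<tau>) (Cone r)"
      using Vup V0 rK \<tau>K ConeC unfolding upper_triangular_def by blast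
    then show "r \<in> K \<and> mx r \<ge> b" using rK unfolding cless_def b_def by simp
  qed
  have bsupp: "\<forall>r. bdry K dim fc z r \<noteq> 0 \<longrightarrow> r \<in> K \<and> mx r \<ge> d"
  proof (intro allI impI)
    fix r assume nz: "bdry K dim fc z r \<noteq> 0"
    then obtain s where "s \<in> K" "bcoef dim fc r s \<noteq> (0::'f)" using bdry_nz by blast
    then have rK: "r \<in> K" using facet by blast
    have "R (Cone r) (Cone \<tau>) \<noteq> 0" using Req[OF rK] nz by simp
    then have "\<not> cless mn mx (Cone \<sigma>) (Cone r)"
      using pair rK ConeC unfolding is_low_def by blast
    then show "r \<in> K \<and> mx r \<ge> d" using rK unfolding cless_def d_def by simp
  qed
  have bs: "bdry K dim fc z \<sigma> \<noteq> 0"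
    using pair Req[OF \<sigma>K] unfolding is_low_def by auto
  have db: "d > b"
  proof -
    obtain s where s: "s \<in> K" "bcoef dim fc \<sigma> s \<noteq> (0::'f)" "z s \<noteq> 0" using bdry_nz[OF bs] by blast
    have "mx s < mx \<sigma>" using facet s by blast
    moreover have "mx s \<ge> b" using zsupp s by blast
    ultimately show ?thesis unfolding d_def by simp
  qed
  have ztau: "z \<tau> \<noteq> 0"
  proof -
    obtain W where W: "\<forall>x\<in>?C. \<forall>y\<in>?C. mat_mult ?C V W x y = (if x = y then 1 else 0)
       \<and> mat_mult ?C W V x y = (if x = y then 1 else 0)"
      using Vinv unfolding mat_invertible_def by blast
    let ?f = "\<lambda>c. (clev c, cval mn mx c)"
    have lt: "cless mn mx x y \<longleftrightarrow> ?f x < ?f y" for x y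
      unfolding cless_def by (auto simp: less_prod_def)
    have inj: "inj_on ?f ?C"
    proof (rule inj_onI)
      fix x y assume xy: "x \<in> ?C" "y \<in> ?C" "?f x = ?f y"
      have imn: "inj_on mn K" and imx: "inj_on mx K" using filt unfolding interval_filtration_def by auto
      show "x = y"
      proof (cases x; cases y)
      qed (use xy imn imx in \<open>auto simp: cone_set_def inj_on_def\<close>)
    qed
    have "\<forall>x\<in>?C. V x x \<noteq> 0"
    proof (rule tri_diag[OF finC inj, of V W])
      show "\<forall>x\<in>?C. \<forall>y\<in>?C. ?f y < ?f x \<longrightarrow> V x y = 0"
        using Vup lt unfolding upper_triangular_def by blast
    qed (use W in auto)
    then show ?thesis using zeq \<tau>K ConeC by auto
  qed
  show ?thesis using db zsupp bsupp ztau bs by blast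
qed

end
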